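(* Let $m\ge1$, $n\ge1$ and let $P_1,\dots,P_m\in\mathcal{M}_n(\mathbb{C})$ be pairwise commuting matrices, i.e. $P_\alpha P_\beta=P_\beta P_\alpha$ for all $\alpha,\beta\in\{1,\dots,m\}$. Assume that one of the following holds: (i) each $P_\alpha$ is diagonalizable; or (ii) $n=2$ and each $P_\alpha$ is invertible. Let $k_1,\dots,k_m$ be positive integers. Then there exist matrices $Q_1,\dots,Q_m\in\mathcal{M}_n(\mathbb{C})$ such that (a) $Q_\alpha^{k_\alpha}=P_\alpha$ for all $\alpha\in\{1,\dots,m\}$, and (b) $Q_\alpha Q_\beta=Q_\beta Q_\alpha$ for all $\alpha,\beta\in\{1,\dots,m\}$. *)

theory Defs
  imports Jordan_Normal_Form.Matrix
begin

definition diagonalizable_mat :: "'a :: semiring_1 mat \<Rightarrow> bool" where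
  "diagonalizable_mat A \<longleftrightarrow> (\<exists>D. diagonal_mat D \<and> similar_mat A D)"

end

theory Submission
  imports Defs "HOL-Computational_Algebra.Fundamental_Theorem_Algebra"
begin

lemma diag_right:
  fixes A Y :: "'a::comm_ring_1 mat"
  assumes A: "A \<in> carrier_mat n n" and Y: "Y \<in> carrier_mat n n" and dA: "diagonal_mat A"
    and i: "i < n" and j: "j < n"
  shows "(Y * A) $$ (i,j) = Y $$ (i,j) * A $$ (j,j)"
proof -
  have "(Y * A) $$ (i,j) = (\<Sum>l\<in>{0..<n}. Y $$ (i,l) * A $$ (l,j))"
    using A Y i j by (simp add: scalar_prod_def)
  also have "\<dots> = (\<Sum>l\<in>{0..<n}. if l = j then Y $$ (i,j) * A $$ (j,j) else 0)"
    by (rule sum.cong, insert dA A j, auto simp: diagonal_mat_def)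
  also have "\<dots> = Y $$ (i,j) * A $$ (j,j)" using j by simp
  finally show ?thesis .
qed

lemma diag_left:
  fixes A Y :: "'a::comm_ring_1 mat"
  assumes A: "A \<in> carrier_mat n n" and Y: "Y \<in> carrier_mat n n" and dA: "diagonal_mat A"
    and i: "i < n" and j: "j < n"
  shows "(A * Y) $$ (i,j) = A $$ (i,i) * Y $$ (i,j)"
proof -
  have "(A * Y) $$ (i,j) = (\<Sum>l\<in>{0..<n}. A $$ (i,l) * Y $$ (l,j))"
    using A Y i j by (simp add: scalar_prod_def)
  also have "\<dots> = (\<Sum>l\<in>{0..<n}. if l = i then A $$ (i,i) * Y $$ (i,j) else 0)"
    by (rule sum.cong, insert dA A i, auto simp: diagonal_mat_def)
  also have "\<dots> = A $$ (i,i) * Y $$ (i,j)" using i by simp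
  finally show ?thesis .
qed

lemma croot: "k \<ge> 1 \<Longrightarrow> ((SOME w. w ^ k = z) :: complex) ^ k = z"
  by (rule someI_ex, rule nth_root_exists, simp)

lemma diag_root:
  fixes P :: "complex mat"
  assumes P: "P \<in> carrier_mat n n" and dg: "diagonalizable_mat P" and k: "k \<ge> 1"
  shows "\<exists>Q \<in> carrier_mat n n. Q ^\<^sub>m k = P \<and> (\<forall>X\<in>carrier_mat n n. X * P = P * X \<longrightarrow> X * Q = Q * X)"
proof -
  obtain D S T where wit: "similar_mat_wit P D S T" and dD: "diagonal_mat D"
    using dg unfolding diagonalizable_mat_def similar_mat_def by blast
  have nP: "n = dim_row P" using P by simp
  note w = similar_mat_witD[OF nP wit]
  have D: "D \<in> carrier_mat n n" and S: "S \<in> carrier_mat n n" and T: "T \<in> carrier_mat n n"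
    and ST: "S * T = 1\<^sub>m n" and TS: "T * S = 1\<^sub>m n" and PD: "P = S * D * T" using w by auto
  have TSZ: "T * (S * Z) = Z" if "Z \<in> carrier_mat n n" for Z
    using that S T by (simp flip: assoc_mult_mat[of T n n S n Z n] add: TS left_mult_one_mat)
  have STZ: "S * (T * Z) = Z" if "Z \<in> carrier_mat n n" for Z
    using that S T by (simp flip: assoc_mult_mat[of S n n T n Z n] add: ST left_mult_one_mat)
  define r where "r = (\<lambda>z::complex. SOME w. w ^ k = z)"
  have r: "r z ^ k = z" for z unfolding r_def using croot[OF k] .
  define E where "E = mat n n (\<lambda>(i,j). if i = j then r (D $$ (i,i)) else 0)"
  have E: "E \<in> carrier_mat n n" unfolding E_def by simp
  have dE: "diagonal_mat E" unfolding E_def diagonal_mat_def by simp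
  have Epow: "E ^\<^sub>m j = mat n n (\<lambda>(i,l). if i = l then r (D $$ (i,i)) ^ j else 0)" for j
  proof (induction j)
    case 0
    show ?case unfolding E_def by (rule eq_matI, auto)
  next
    case (Suc j)
    have Ej: "E ^\<^sub>m j \<in> carrier_mat n n" using E by simp
    show ?case
    proof (rule eq_matI)
      fix i l assume i: "i < dim_row (mat n n (\<lambda>(i,l). if i = l then r (D $$ (i,i)) ^ Suc j else 0))"
        and l: "l < dim_col (mat n n (\<lambda>(i,l). if i = l then r (D $$ (i,i)) ^ Suc j else 0))"
      have il: "i < n" "l < n" using i l by auto
      have eq: "(E ^\<^sub>m Suc j) $$ (i,l) = (E ^\<^sub>m j) $$ (i,l) * E $$ (l,l)"
        using diag_right[OF E Ej dE il] by simp
      show "(E ^\<^sub>m Suc j) $$ (i,l) = mat n n (\<lambda>(i,l). if i = l then r (D $$ (i,i)) ^ Suc j else 0) $$ (i,l)"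
        unfolding eq Suc.IH unfolding E_def using il by auto
    qed (insert E, auto)
  qed
  have EkD: "E ^\<^sub>m k = D"
    unfolding Epow by (rule eq_matI, insert D dD r, auto simp: diagonal_mat_def)
  define Q where "Q = S * E * T"
  have Q: "Q \<in> carrier_mat n n" unfolding Q_def using S E T by auto
  have witQ: "similar_mat_wit Q E S T"
    by (rule similar_mat_witI[OF ST TS Q_def Q E S T])
  have Qk: "Q ^\<^sub>m k = P"
    using similar_mat_wit_pow_id[OF witQ, of k] EkD PD by simp
  have comm: "X * Q = Q * X" if X: "X \<in> carrier_mat n n" and XP: "X * P = P * X" for X
  proof -
    define Y where "Y = T * X * S"
    have Y: "Y \<in> carrier_mat n n" unfolding Y_def using T X S by auto
    have "Y * D = T * (X * P) * S"
      unfolding Y_def PD using T X S D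
      by (simp add: assoc_mult_mat[of _ n n _ n _ n] TS right_mult_one_mat)
    also have "\<dots> = T * (P * X) * S" using XP by simp
    also have "\<dots> = D * Y"
      unfolding Y_def PD using T X S D
      by (simp add: assoc_mult_mat[of _ n n _ n _ n] TSZ)
    finally have YD: "Y * D = D * Y" .
    have YE: "Y * E = E * Y"
    proof (rule eq_matI)
      fix i j assume i: "i < dim_row (E * Y)" and j: "j < dim_col (E * Y)"
      hence i: "i < n" and j: "j < n" using E Y by auto
      have "Y $$ (i,j) * D $$ (j,j) = D $$ (i,i) * Y $$ (i,j)"
        using arg_cong[OF YD, of "\<lambda>M. M $$ (i,j)"] diag_right[OF D Y dD i j] diag_left[OF D Y dD i j]
        by simp
      hence "Y $$ (i,j) = 0 \<or> D $$ (i,i) = D $$ (j,j)" by (auto simp: mult.commute)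
      hence "Y $$ (i,j) * E $$ (j,j) = E $$ (i,i) * Y $$ (i,j)"
        unfolding E_def using i j by auto
      thus "(Y * E) $$ (i,j) = (E * Y) $$ (i,j)"
        using diag_right[OF E Y dE i j] diag_left[OF E Y dE i j] by simp
    qed (insert E Y, auto)
    have XY: "X = S * Y * T" unfolding Y_def using T X S
      by (simp add: assoc_mult_mat[of _ n n _ n _ n] STZ ST right_mult_one_mat)
    have "X * Q = S * (Y * E) * T" unfolding XY Q_def using S Y T E
      by (simp add: assoc_mult_mat[of _ n n _ n _ n] TSZ)
    also have "\<dots> = S * (E * Y) * T" using YE by simp
    also have "\<dots> = Q * X" unfolding XY Q_def using S Y T E
      by (simp add: assoc_mult_mat[of _ n n _ n _ n] TSZ)
    finally show ?thesis .
  qed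
  show ?thesis using Q Qk comm by blast
qed

lemma less2: "(i::nat) < 2 \<Longrightarrow> i = 0 \<or> i = 1" by auto

lemma mult2:
  fixes A B :: "complex mat"
  assumes "A \<in> carrier_mat 2 2" "B \<in> carrier_mat 2 2" "i < 2" "j < 2"
  shows "(A * B) $$ (i,j) = A $$ (i,0) * B $$ (0,j) + A $$ (i,1) * B $$ (1,j)"
  using assms by (simp add: scalar_prod_def numeral_2_eq_2)

definition lin :: "complex mat \<Rightarrow> complex \<Rightarrow> complex \<Rightarrow> complex mat" where
  "lin P x y = mat 2 2 (\<lambda>(i,j). (if i = j then x else 0) + y * P $$ (i,j))"

lemma lin_dim[simp]: "dim_row (lin P x y) = 2" "dim_col (lin P x y) = 2" unfolding lin_def by simp_all

lemma lin_carrier[simp]: "lin P x y \<in> carrier_mat 2 2" unfolding lin_def by simp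

lemma lin_idx: "i < 2 \<Longrightarrow> j < 2 \<Longrightarrow> lin P x y $$ (i,j) = (if i = j then x else 0) + y * P $$ (i,j)"
  unfolding lin_def by simp

lemma lin_mult:
  assumes P: "P \<in> carrier_mat 2 2"
  shows "lin P x y * lin P u v = lin P (x*u - y*v*(P$$(0,0)*P$$(1,1) - P$$(0,1)*P$$(1,0)))
      (x*v + y*u + y*v*(P$$(0,0) + P$$(1,1)))"
proof (rule eq_matI)
  fix i j assume i: "i < dim_row (lin P (x*u - y*v*(P$$(0,0)*P$$(1,1) - P$$(0,1)*P$$(1,0)))
      (x*v + y*u + y*v*(P$$(0,0) + P$$(1,1))))" and j: "j < dim_col (lin P (x*u - y*v*(P$$(0,0)*P$$(1,1) - P$$(0,1)*P$$(1,0)))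
      (x*v + y*u + y*v*(P$$(0,0) + P$$(1,1))))"
  hence i: "i < 2" and j: "j < 2" by auto
  show "(lin P x y * lin P u v) $$ (i,j) = lin P (x*u - y*v*(P$$(0,0)*P$$(1,1) - P$$(0,1)*P$$(1,0)))
      (x*v + y*u + y*v*(P$$(0,0) + P$$(1,1))) $$ (i,j)"
    unfolding mult2[OF lin_carrier lin_carrier i j] lin_idx[OF i j]
    using less2[OF i] less2[OF j] by (auto simp: lin_idx algebra_simps)
qed auto

lemma lin_comm:
  assumes P: "P \<in> carrier_mat 2 2" and X: "X \<in> carrier_mat 2 2" and XP: "X * P = P * X"
  shows "X * lin P x y = lin P x y * X"
proof (rule eq_matI)
  fix i j assume "i < dim_row (lin P x y * X)" "j < dim_col (lin P x y * X)"
  hence i: "i < 2" and j: "j < 2" using X by auto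
  have e: "(X * P) $$ (i,j) = (P * X) $$ (i,j)" using XP by simp
  have e1: "(X * lin P x y) $$ (i,j) = x * X $$ (i,j) + y * (X * P) $$ (i,j)"
    unfolding mult2[OF X lin_carrier i j] mult2[OF X P i j]
    using less2[OF i] less2[OF j] by (auto simp: lin_idx algebra_simps)
  have e2: "(lin P x y * X) $$ (i,j) = x * X $$ (i,j) + y * (P * X) $$ (i,j)"
    unfolding mult2[OF lin_carrier X i j] mult2[OF P X i j]
    using less2[OF i] less2[OF j] by (auto simp: lin_idx algebra_simps)
  show "(X * lin P x y) $$ (i,j) = (lin P x y * X) $$ (i,j)" using e e1 e2 by simp
qed (insert X, auto)

lemma lin01: "P \<in> carrier_mat 2 2 \<Longrightarrow> lin P 0 1 = P"
  by (rule eq_matI, auto simp: lin_idx)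

lemma lin10: "lin P 1 0 = 1\<^sub>m 2"
  by (rule eq_matI, auto simp: lin_idx)

lemma lin00: "lin P 0 0 = 0\<^sub>m 2 2"
  by (rule eq_matI, auto simp: lin_idx)

lemma two_root:
  fixes P :: "complex mat"
  assumes P: "P \<in> carrier_mat 2 2" and inv: "invertible_mat P" and k: "k \<ge> 1"
  shows "\<exists>Q \<in> carrier_mat 2 2. Q ^\<^sub>m k = P \<and> (\<forall>X\<in>carrier_mat 2 2. X * P = P * X \<longrightarrow> X * Q = Q * X)"
proof -
  define tt where "tt = P$$(0,0) + P$$(1,1)"
  define dd where "dd = P$$(0,0)*P$$(1,1) - P$$(0,1)*P$$(1,0)"
  have LM: "lin P x y * lin P u v = lin P (x*u - y*v*dd) (x*v + y*u + y*v*tt)" for x y u v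
    unfolding tt_def dd_def by (rule lin_mult[OF P])
  define r where "r = (\<lambda>z::complex. SOME w. w ^ k = z)"
  have r: "r z ^ k = z" for z unfolding r_def using croot[OF k] .
  define s where "s = csqrt (tt^2 - 4*dd)"
  have s2: "s^2 = tt^2 - 4*dd" unfolding s_def by simp
  have comm: "\<forall>X\<in>carrier_mat 2 2. X * P = P * X \<longrightarrow> X * lin P x y = lin P x y * X" for x y
    using lin_comm[OF P] by blast
  show ?thesis
  proof (cases "s = 0")
    case False
    define l1 where "l1 = (tt + s)/2"
    define l2 where "l2 = (tt - s)/2"
    define M where "M = (\<lambda>u v. lin P ((v*l1 - u*l2)/s) ((u-v)/s))"
    have dd_eq: "dd = (tt^2 - s^2)/4" using s2 by simp
    have MM: "M u v * M u' v' = M (u*u') (v*v')" for u v u' v'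
      unfolding M_def LM
    proof (rule arg_cong2[where f = "lin P"])
      show "(v * l1 - u * l2) / s * ((v' * l1 - u' * l2) / s) - (u - v) / s * ((u' - v') / s) * dd =
        (v * v' * l1 - u * u' * l2) / s"
        unfolding dd_eq l1_def l2_def using False by (simp add: field_simps power2_eq_square)
      show "(v * l1 - u * l2) / s * ((u' - v') / s) + (u - v) / s * ((v' * l1 - u' * l2) / s) +
        (u - v) / s * ((u' - v') / s) * tt = (u * u' - v * v') / s"
        unfolding l1_def l2_def using False by (simp add: field_simps power2_eq_square)
    qed
    have Mpow: "M u v ^\<^sub>m j = M (u^j) (v^j)" for u v j
    proof (induction j)
      case 0
      have "M 1 1 = lin P 1 0" unfolding M_def l1_def l2_def using False by (simp add: field_simps)
      thus ?case by (simp add: lin10 M_def)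
    next
      case (Suc j)
      thus ?case by (simp add: MM mult.commute)
    qed
    define Q where "Q = M (r l1) (r l2)"
    have "Q ^\<^sub>m k = M l1 l2" unfolding Q_def Mpow r ..
    also have "\<dots> = lin P 0 1" unfolding M_def l1_def l2_def using False by (simp add: field_simps)
    also have "\<dots> = P" by (rule lin01[OF P])
    finally have "Q ^\<^sub>m k = P" .
    moreover have "Q \<in> carrier_mat 2 2" unfolding Q_def M_def by simp
    ultimately show ?thesis using comm unfolding Q_def M_def by blast
  next
    case True
    define lam where "lam = tt/2"
    have dd_eq: "dd = lam^2" and tt_eq: "tt = 2*lam" using s2 True unfolding lam_def
      by (simp_all add: field_simps power2_eq_square)
    have lam0: "lam \<noteq> 0"
    proof
      assume l0: "lam = 0"
      have PP: "P * P = 0\<^sub>m 2 2"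
        using LM[of 0 1 0 1] lin01[OF P] lin00[of P] unfolding dd_eq tt_eq l0 by simp
      from inv obtain B where PB0: "inverts_mat P B" and BP0: "inverts_mat B P"
        unfolding invertible_mat_def by blast
      have PB: "P * B = 1\<^sub>m 2" using PB0 P unfolding inverts_mat_def by simp
      have BP: "B * P = 1\<^sub>m (dim_row B)" using BP0 unfolding inverts_mat_def by simp
      have c1: "dim_col B = 2" using arg_cong[OF PB, of dim_col] by simp
      have c2: "dim_row B = 2" using arg_cong[OF BP, of dim_col] P by simp
      have B: "B \<in> carrier_mat 2 2" using c1 c2 unfolding carrier_mat_def by simp
      have "P = P * 1\<^sub>m 2" using P by simp
      also have "\<dots> = P * (P * B)" unfolding PB ..
      also have "\<dots> = (P * P) * B" using P B by (simp only: assoc_mult_mat)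
      also have "\<dots> = 0\<^sub>m 2 2" unfolding PP using B by (simp add: left_mult_zero_mat)
      finally have P0: "P = 0\<^sub>m 2 2" .
      have "P * B = 0\<^sub>m 2 2" unfolding P0 using B by (simp add: left_mult_zero_mat)
      hence "(1\<^sub>m 2 :: complex mat) $$ (0,0) = (0\<^sub>m 2 2 :: complex mat) $$ (0,0)" using PB by simp
      thus False by simp
    qed
    define N where "N = (\<lambda>u w. lin P (u - u*w*lam) (u*w))"
    have NN: "N u w * N u' w' = N (u*u') (w+w')" for u w u' w'
      unfolding N_def LM dd_eq tt_eq
      by (rule arg_cong2[where f = "lin P"]; simp add: algebra_simps power2_eq_square)
    have Npow: "N u w ^\<^sub>m j = N (u^j) (of_nat j * w)" for u w j
    proof (induction j)
      case 0
      thus ?case by (simp add: lin10 N_def)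
    next
      case (Suc j)
      thus ?case by (simp add: NN algebra_simps)
    qed
    define Q where "Q = N (r lam) (1 / (of_nat k * lam))"
    have "Q ^\<^sub>m k = N lam (1/lam)" unfolding Q_def Npow r using k by simp
    also have "\<dots> = lin P 0 1" unfolding N_def using lam0 by simp
    also have "\<dots> = P" by (rule lin01[OF P])
    finally have "Q ^\<^sub>m k = P" .
    moreover have "Q \<in> carrier_mat 2 2" unfolding Q_def N_def by simp
    ultimately show ?thesis using comm unfolding Q_def N_def by blast
  qed
qed

lemma single_root:
  fixes P :: "complex mat"
  assumes P: "P \<in> carrier_mat n n" and k: "k \<ge> 1"
    and c: "diagonalizable_mat P \<or> (n = 2 \<and> invertible_mat P)"
  shows "\<exists>Q \<in> carrier_mat n n. Q ^\<^sub>m k = P \<and> (\<forall>X\<in>carrier_mat n n. X * P = P * X \<longrightarrow> X * Q = Q * X)"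
  using c diag_root[OF P _ k] two_root[OF _ _ k] P by blast

theorem proposition2p9:
  fixes m n :: nat and P :: "nat \<Rightarrow> complex mat" and k :: "nat \<Rightarrow> nat"
  assumes "m \<ge> 1" and "n \<ge> 1"
    and P_dim: "\<forall>\<alpha>\<in>{1..m}. P \<alpha> \<in> carrier_mat n n"
    and P_comm: "\<forall>\<alpha>\<in>{1..m}. \<forall>\<beta>\<in>{1..m}. P \<alpha> * P \<beta> = P \<beta> * P \<alpha>"
    and cond: "(\<forall>\<alpha>\<in>{1..m}. diagonalizable_mat (P \<alpha>))
             \<or> (n = 2 \<and> (\<forall>\<alpha>\<in>{1..m}. invertible_mat (P \<alpha>)))"
    and k_pos: "\<forall>\<alpha>\<in>{1..m}. k \<alpha> \<ge> 1"
  shows "\<exists>Q :: nat \<Rightarrow> complex mat.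
           (\<forall>\<alpha>\<in>{1..m}. Q \<alpha> \<in> carrier_mat n n)
         \<and> (\<forall>\<alpha>\<in>{1..m}. Q \<alpha> ^\<^sub>m k \<alpha> = P \<alpha>)
         \<and> (\<forall>\<alpha>\<in>{1..m}. \<forall>\<beta>\<in>{1..m}. Q \<alpha> * Q \<beta> = Q \<beta> * Q \<alpha>)"
proof -
  have "\<forall>\<alpha>\<in>{1..m}. \<exists>Q. Q \<in> carrier_mat n n \<and> Q ^\<^sub>m k \<alpha> = P \<alpha> \<and>
      (\<forall>X\<in>carrier_mat n n. X * P \<alpha> = P \<alpha> * X \<longrightarrow> X * Q = Q * X)"
  proof
    fix a assume a: "a \<in> {1..m}"
    have "diagonalizable_mat (P a) \<or> (n = 2 \<and> invertible_mat (P a))" using cond a by blast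
    from single_root[OF _ _ this] P_dim k_pos a show "\<exists>Q. Q \<in> carrier_mat n n \<and> Q ^\<^sub>m k a = P a \<and>
      (\<forall>X\<in>carrier_mat n n. X * P a = P a * X \<longrightarrow> X * Q = Q * X)" by blast
  qed
  then obtain Q where Q: "\<And>a. a \<in> {1..m} \<Longrightarrow> Q a \<in> carrier_mat n n \<and> Q a ^\<^sub>m k a = P a \<and>
      (\<forall>X\<in>carrier_mat n n. X * P a = P a * X \<longrightarrow> X * Q a = Q a * X)"
    by metis
  have "Q a * Q b = Q b * Q a" if a: "a \<in> {1..m}" and b: "b \<in> {1..m}" for a b
  proof -
    have "P b * Q a = Q a * P b" using Q[OF a] P_dim P_comm a b by blast
    hence "Q a * P b = P b * Q a" by simp
    thus ?thesis using Q[OF b] Q[OF a] by blast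
  qed
  thus ?thesis using Q by blast
qed

end
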